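(* The Max-Egal objective is strategyproof against a manipulator $m^+$ (one who can only add edges) over directed networks. That is, for every $k$, every directed social network $G$, every agent $m$ and every manipulation in which $m$ adds outgoing edges $(m,a)\notin E$ (yielding $G^m$), we have \[\min_{P\in O(G^m)} u(m,P)\le\min_{P\in O(G)} u(m,P)\quad\text{and}\quad \max_{P\in O(G^m)} u(m,P)\le\max_{P\in O(G)} u(m,P),\] where $O(\cdot)$ denotes the set of Max-Egal solutions and $u(m,P)$ is computed in the true network $G$.
   Context: Let $A=\{a_1,\dots,a_n\}$ be a finite nonempty set of agents and $G=\langle A,E\rangle$ a directed graph without self-loops (the social network); $N(a)=\{b:(a,b)\in E\}$. For a coalition $C\subseteq A$ with $a\in C$, $u(a,C)=|C\cap N(a)|$. For $0<k\le n$, $\Pi_k$ is the set of partitions of $A$ into exactly $k$ nonempty coalitions; for $P\in\Pi_k$, $u(a,P)=u(a,C)$ where $C\in P$ contains $a$. The Max-Egal objective: $O(G)$ is the set of $P\in\Pi_k$ maximizing $\min_{a\in A}u(a,P)$ (utilities computed in the network in question). A manipulator $m$ of type $m^+$ in a directed network may add only outgoing edges $(m,a)\notin E$; incoming edges cannot be changed, so $N^m(a)=N(a)$ for all $a\ne m$, where $N^m$ is the neighbourhood in the reported network $G^m$. The utility $u(m,P)$ of the manipulator is always computed with respect to his true neighbours in the original $G$. *)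

theory Defs
  imports "HOL-Library.Disjoint_Sets"
begin

definition digraph_on :: "'a set \<Rightarrow> ('a \<times> 'a) set \<Rightarrow> bool" where
  "digraph_on A E \<longleftrightarrow> E \<subseteq> A \<times> A \<and> (\<forall>a. (a, a) \<notin> E)"

definition nbrs :: "('a \<times> 'a) set \<Rightarrow> 'a \<Rightarrow> 'a set" where
  "nbrs E a = {b. (a, b) \<in> E}"

definition util_coal :: "('a \<times> 'a) set \<Rightarrow> 'a \<Rightarrow> 'a set \<Rightarrow> nat" where
  "util_coal E a C = card (C \<inter> nbrs E a)"

definition partitions_k :: "'a set \<Rightarrow> nat \<Rightarrow> 'a set set set" where
  "partitions_k A k = {P. partition_on A P \<and> card P = k}"

definition coal_of :: "'a set set \<Rightarrow> 'a \<Rightarrow> 'a set" where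
  "coal_of P a = (THE C. C \<in> P \<and> a \<in> C)"

definition util :: "('a \<times> 'a) set \<Rightarrow> 'a \<Rightarrow> 'a set set \<Rightarrow> nat" where
  "util E a P = util_coal E a (coal_of P a)"

definition egal :: "'a set \<Rightarrow> ('a \<times> 'a) set \<Rightarrow> 'a set set \<Rightarrow> nat" where
  "egal A E P = Min ((\<lambda>a. util E a P) ` A)"

definition max_egal :: "'a set \<Rightarrow> ('a \<times> 'a) set \<Rightarrow> nat \<Rightarrow> 'a set set set" where
  "max_egal A E k = {P \<in> partitions_k A k. \<forall>Q \<in> partitions_k A k. egal A E Q \<le> egal A E P}"

definition plus_manip :: "'a set \<Rightarrow> ('a \<times> 'a) set \<Rightarrow> 'a \<Rightarrow> ('a \<times> 'a) set \<Rightarrow> bool" where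
  "plus_manip A E m Em \<longleftrightarrow> digraph_on A Em \<and> E \<subseteq> Em \<and> (\<forall>(x, y) \<in> Em - E. x = m)"

end

theory Submission
  imports Defs
begin

lemma exists_partition_k:
  assumes "finite A"
  shows "1 \<le> k \<Longrightarrow> k \<le> card A \<Longrightarrow> \<exists>P. partition_on A P \<and> card P = k"
  using assms
proof (induction A arbitrary: k rule: finite_induct)
  case empty
  then show ?case by simp
next
  case (insert x B)
  show ?case
  proof (cases "k = 1")
    case True
    then show ?thesis
      by (intro exI[of _ "{insert x B}"]) (auto intro: partition_on_space)
  next
    case False
    then have "1 \<le> k - 1" "k - 1 \<le> card B" using insert by auto
    then obtain P where P: "partition_on B P" "card P = k - 1" using insert.IH by blast
    have U: "\<Union>P = B" using partition_onD1[OF P(1)] by simp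
    have xP: "{x} \<notin> P" using U insert.hyps(2) by auto
    have fP: "finite P"
      using P(2) \<open>1 \<le> k - 1\<close> by (intro card_ge_0_finite) simp
    have "partition_on (insert x B) (insert {x} P)"
      using U insert.hyps(2) P(1)
      by (subst partition_on_insert) (auto simp: disjnt_iff)
    moreover have "card (insert {x} P) = k" using xP fP P(2) False insert.prems by simp
    ultimately show ?thesis by blast
  qed
qed

lemma finite_ex_max:
  fixes f :: "'b \<Rightarrow> nat"
  assumes "finite S" "S \<noteq> {}"
  shows "\<exists>P\<in>S. \<forall>Q\<in>S. f Q \<le> f P"
proof -
  have "Max (f ` S) \<in> f ` S" using assms by simp
  then obtain P where "P \<in> S" "f P = Max (f ` S)" by auto
  then show ?thesis using assms by (intro bexI[of _ P] ballI) auto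
qed

theorem theorem2:
  fixes A :: "'a set" and E Em :: "('a \<times> 'a) set" and m :: 'a and k :: nat
  assumes "finite A" and "A \<noteq> {}"
    and "digraph_on A E"
    and "0 < k" and "k \<le> card A"
    and "m \<in> A"
    and "plus_manip A E m Em"
  shows "Min ((\<lambda>P. util E m P) ` max_egal A Em k) \<le> Min ((\<lambda>P. util E m P) ` max_egal A E k)
       \<and> Max ((\<lambda>P. util E m P) ` max_egal A Em k) \<le> Max ((\<lambda>P. util E m P) ` max_egal A E k)"
proof -
  define S where "S = partitions_k A k"
  have finS: "finite S"
  proof (rule finite_subset)
    show "S \<subseteq> Pow (Pow A)"
      unfolding S_def partitions_k_def partition_on_def by auto
    show "finite (Pow (Pow A))" using assms(1) by simp
  qed
  have neS: "S \<noteq> {}"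
    using exists_partition_k[OF assms(1), of k] assms(4,5) unfolding S_def partitions_k_def by auto
  have OE: "max_egal A E k = {P \<in> S. \<forall>Q\<in>S. egal A E Q \<le> egal A E P}"
    unfolding max_egal_def S_def by simp
  have OEm: "max_egal A Em k = {P \<in> S. \<forall>Q\<in>S. egal A Em Q \<le> egal A Em P}"
    unfolding max_egal_def S_def by simp
  have finOE: "finite (max_egal A E k)" and finOEm: "finite (max_egal A Em k)"
    using finS OE OEm by auto
  have neOE: "max_egal A E k \<noteq> {}" using finite_ex_max[OF finS neS, of "egal A E"] OE by auto
  have neOEm: "max_egal A Em k \<noteq> {}" using finite_ex_max[OF finS neS, of "egal A Em"] OEm by auto
  have EEm: "E \<subseteq> Em" and dEm: "digraph_on A Em" and new: "\<forall>(x, y) \<in> Em - E. x = m"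
    using assms(7) unfolding plus_manip_def by auto
  have same: "util Em a P = util E a P" if "a \<noteq> m" for a P
  proof -
    have "nbrs Em a = nbrs E a" using EEm new that unfolding nbrs_def by auto
    then show ?thesis unfolding util_def util_coal_def by simp
  qed
  have mono: "util E a P \<le> util Em a P" for a P
  proof -
    have "nbrs Em a \<subseteq> A" using dEm unfolding digraph_on_def nbrs_def by auto
    then have "finite (coal_of P a \<inter> nbrs Em a)" using assms(1) by (meson finite_Int finite_subset)
    moreover have "coal_of P a \<inter> nbrs E a \<subseteq> coal_of P a \<inter> nbrs Em a"
      using EEm unfolding nbrs_def by auto
    ultimately show ?thesis unfolding util_def util_coal_def by (rule card_mono)
  qed
  have egal_le: "egal A E P \<le> util E a P" if "a \<in> A" for a P
    unfolding egal_def using assms(1) that by simp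
  have egalm_le: "egal A Em P \<le> util Em a P" if "a \<in> A" for a P
    unfolding egal_def using assms(1) that by simp
  have egal_mono: "egal A E P \<le> egal A Em P" for P
  proof -
    have "egal A Em P \<in> (\<lambda>a. util Em a P) ` A" unfolding egal_def using assms(1,2) by simp
    then obtain a where "a \<in> A" "egal A Em P = util Em a P" by auto
    then show ?thesis using egal_le[of a P] mono[of a P] by simp
  qed
  have key: "util E m P = egal A E P" if "egal A E P < egal A Em P" for P
  proof -
    have "egal A E P \<in> (\<lambda>a. util E a P) ` A" unfolding egal_def using assms(1,2) by simp
    then obtain a where a: "a \<in> A" "egal A E P = util E a P" by auto
    show ?thesis
    proof (cases "a = m")
      case True then show ?thesis using a by simp
    next
      case False
      then have "egal A Em P \<le> util E a P" using egalm_le[OF a(1)] same[OF False] by simp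
      then show ?thesis using a that by simp
    qed
  qed
  have "Min ((\<lambda>P. util E m P) ` max_egal A E k) \<in> (\<lambda>P. util E m P) ` max_egal A E k"
    using finOE neOE by simp
  then obtain Q0 where Q0: "Q0 \<in> max_egal A E k" "util E m Q0 = Min ((\<lambda>P. util E m P) ` max_egal A E k)"
    by auto
  obtain P1 where P1: "P1 \<in> max_egal A Em k" using neOEm by auto
  have part1: "Min ((\<lambda>P. util E m P) ` max_egal A Em k) \<le> util E m Q0"
  proof (cases "egal A Em P1 \<le> egal A E Q0")
    case True
    have "Q0 \<in> max_egal A Em k"
    proof -
      have "Q0 \<in> S" using Q0(1) OE by auto
      moreover have "\<forall>Q\<in>S. egal A Em Q \<le> egal A Em Q0"
        using P1 OEm True egal_mono[of Q0] by fastforce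
      ultimately show ?thesis using OEm by auto
    qed
    then show ?thesis using finOEm by simp
  next
    case False
    have "P1 \<in> S" using P1 OEm by auto
    then have "egal A E P1 \<le> egal A E Q0" using Q0(1) OE by auto
    then have "util E m P1 = egal A E P1" using key[of P1] False by simp
    also have "\<dots> \<le> util E m Q0" using \<open>egal A E P1 \<le> egal A E Q0\<close> egal_le[OF assms(6), of Q0] by simp
    finally have "util E m P1 \<le> util E m Q0" .
    moreover have "Min ((\<lambda>P. util E m P) ` max_egal A Em k) \<le> util E m P1" using finOEm P1 by simp
    ultimately show ?thesis by simp
  qed
  have part2: "Max ((\<lambda>P. util E m P) ` max_egal A Em k) \<le> Max ((\<lambda>P. util E m P) ` max_egal A E k)"
  proof -
    have "Max ((\<lambda>P. util E m P) ` max_egal A Em k) \<in> (\<lambda>P. util E m P) ` max_egal A Em k"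
      using finOEm neOEm by simp
    then obtain P where P: "P \<in> max_egal A Em k" "util E m P = Max ((\<lambda>P. util E m P) ` max_egal A Em k)"
      by auto
    have "util E m P \<le> Max ((\<lambda>P. util E m P) ` max_egal A E k)"
    proof (cases "P \<in> max_egal A E k")
      case True then show ?thesis using finOE by simp
    next
      case False
      have PS: "P \<in> S" using P(1) OEm by auto
      then obtain Q where Q: "Q \<in> S" "egal A E P < egal A E Q" using False OE PS by auto
      have "egal A E Q \<le> egal A E Q0" using Q(1) Q0(1) OE by auto
      moreover have "egal A Em Q0 \<le> egal A Em P" using P(1) OEm Q0(1) OE by auto
      ultimately have lt: "egal A E P < egal A E Q0" "egal A E Q0 \<le> egal A Em P"
        using Q(2) egal_mono[of Q0] by auto
      then have "util E m P = egal A E P" using key[of P] by simp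
      also have "\<dots> \<le> util E m Q0" using lt egal_le[OF assms(6), of Q0] by simp
      also have "\<dots> \<le> Max ((\<lambda>P. util E m P) ` max_egal A E k)" using finOE Q0(1) by simp
      finally show ?thesis .
    qed
    then show ?thesis using P(2) by simp
  qed
  show ?thesis using part1 part2 Q0(2) by simp
qed

end
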